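(* Let $N\ge1$, let $L_1,\dots,L_N$, $K_1,\dots,K_N$ be positive integers with $K_n\le L_n$, let $P$ be a positive integer, and let $H$ be a TTM-tree (as defined in the context) with $|H|$ nodes. Let $\psi(P,N)$ be the number of ordered $N$-tuples of positive integers whose product is $P$. There is a dynamic-programming algorithm that computes a dynamic grid scheme for $H$ of minimum total communication volume (over all dynamic grid schemes using valid grids), using $O(|H|\cdot\psi(P,N))$ dynamic-programming table lookups.
   Context: A TTM-tree is a finite rooted tree whose root carries the label "input tensor", with exactly $N$ leaves labelled bijectively by $\{1,\dots,N\}$, whose internal nodes (neither root nor leaf) are labelled by modes in $\{1,\dots,N\}$, and such that for each leaf labelled $n$ the root-to-leaf path contains exactly $N-1$ internal nodes, carrying every mode other than $n$. Cardinalities: $c(\text{root})=\prod_j L_j$, and for an internal node $u$ with label $n$ and parent $v$, $|\mathrm{In}(u)|=c(v)$ and $|\mathrm{Out}(u)|=c(u)=(K_n/L_n)c(v)$. A grid is an $N$-tuple $g=(q_1,\dots,q_N)$ of positive integers with $\prod_j q_j=P$; it is valid if $q_n\le K_n$ for all $n$. A dynamic grid scheme $\pi$ assigns a valid grid $\pi(u)$ to every node $u$ of $H$. Its volume is the sum over all internal nodes $u$ (with label $n$ and parent $v$) of $(q_n-1)\,|\mathrm{Out}(u)|$, where $q_n$ is the $n$-th entry of $\pi(u)$, plus $|\mathrm{In}(u)|$ if $\pi(u)\neq\pi(v)$ (regridding cost) and $0$ otherwise. The grid at the root is free (no regridding cost at the root). *)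

theory Defs
  imports Complex_Main
begin

text \<open>The label of the
root is ignored (it stands for "input tensor"); leaves are the non-root nodes
without children; all other nodes are internal. Nodes are addressed by positions
(lists of child indices, the root being the empty list).\<close>

datatype tree = Node nat "tree list"

fun children :: "tree \<Rightarrow> tree list" where
  "children (Node n ts) = ts"

fun tlabel :: "tree \<Rightarrow> nat" where
  "tlabel (Node n ts) = n"

fun subtree_at :: "tree \<Rightarrow> nat list \<Rightarrow> tree option" where
  "subtree_at t [] = Some t"
| "subtree_at (Node n ts) (i # p) = (if i < length ts then subtree_at (ts ! i) p else None)"

definition positions :: "tree \<Rightarrow> nat list set" where
  "positions H = {p. subtree_at H p \<noteq> None}"

definition lab :: "tree \<Rightarrow> nat list \<Rightarrow> nat" where
  "lab H p = (case subtree_at H p of Some t \<Rightarrow> tlabel t | None \<Rightarrow> 0)"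

definition is_leaf :: "tree \<Rightarrow> nat list \<Rightarrow> bool" where
  "is_leaf H p \<longleftrightarrow> p \<in> positions H \<and> p \<noteq> [] \<and> children (the (subtree_at H p)) = []"

definition is_internal :: "tree \<Rightarrow> nat list \<Rightarrow> bool" where
  "is_internal H p \<longleftrightarrow> p \<in> positions H \<and> p \<noteq> [] \<and> children (the (subtree_at H p)) \<noteq> []"

definition num_nodes :: "tree \<Rightarrow> nat" where
  "num_nodes H = card (positions H)"

text \<open>TTM-tree with N modes: N leaves labelled bijectively by {1..N}; internal
nodes labelled by modes in {1..N}; the root-to-leaf path of the leaf labelled n
contains exactly N-1 internal nodes (the strict non-root prefixes of its
position), and they carry every mode other than n.\<close>
definition ttm_tree :: "nat \<Rightarrow> tree \<Rightarrow> bool" where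
  "ttm_tree N H \<longleftrightarrow>
     bij_betw (lab H) {p. is_leaf H p} {1..N} \<and>
     (\<forall>p. is_internal H p \<longrightarrow> lab H p \<in> {1..N}) \<and>
     (\<forall>p. is_leaf H p \<longrightarrow>
        card {q. (\<exists>k. 0 < k \<and> k < length p \<and> q = take k p) \<and> is_internal H q} = N - 1 \<and>
        lab H ` {q. (\<exists>k. 0 < k \<and> k < length p \<and> q = take k p) \<and> is_internal H q} = {1..N} - {lab H p})"

text \<open>c(root) = prod L_j; for an internal node u with label n and parent v,
c(u) = (K_n / L_n) c(v). (Leaves inherit the value of their parent; this value
is never used.)\<close>
fun cwalk :: "(nat \<Rightarrow> nat) \<Rightarrow> (nat \<Rightarrow> nat) \<Rightarrow> real \<Rightarrow> tree \<Rightarrow> nat list \<Rightarrow> real" where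
  "cwalk K L c t [] = c"
| "cwalk K L c (Node n ts) (i # p) =
     (if i < length ts then
        (let u = ts ! i in
         cwalk K L (if children u = [] then c else real (K (tlabel u)) / real (L (tlabel u)) * c) u p)
      else 0)"

definition card_node :: "nat \<Rightarrow> (nat \<Rightarrow> nat) \<Rightarrow> (nat \<Rightarrow> nat) \<Rightarrow> tree \<Rightarrow> nat list \<Rightarrow> real" where
  "card_node N L K H p = cwalk K L (\<Prod>j\<in>{1..N}. real (L j)) H p"

text \<open>A grid is an N-tuple (list of length N, entry n-1 is q_n) of positive
integers with product P.\<close>
definition grids :: "nat \<Rightarrow> nat \<Rightarrow> nat list set" where
  "grids N P = {g. length g = N \<and> (\<forall>x\<in>set g. 0 < x) \<and> prod_list g = P}"

definition psi :: "nat \<Rightarrow> nat \<Rightarrow> nat" where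
  "psi P N = card (grids N P)"

definition valid_grid :: "nat \<Rightarrow> (nat \<Rightarrow> nat) \<Rightarrow> nat \<Rightarrow> nat list \<Rightarrow> bool" where
  "valid_grid N K P g \<longleftrightarrow> g \<in> grids N P \<and> (\<forall>n\<in>{1..N}. g ! (n - 1) \<le> K n)"

definition dyn_scheme :: "nat \<Rightarrow> (nat \<Rightarrow> nat) \<Rightarrow> nat \<Rightarrow> tree \<Rightarrow> (nat list \<Rightarrow> nat list) \<Rightarrow> bool" where
  "dyn_scheme N K P H \<pi> \<longleftrightarrow> (\<forall>p\<in>positions H. valid_grid N K P (\<pi> p))"

definition volume :: "nat \<Rightarrow> (nat \<Rightarrow> nat) \<Rightarrow> (nat \<Rightarrow> nat) \<Rightarrow> tree \<Rightarrow> (nat list \<Rightarrow> nat list) \<Rightarrow> real" where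
  "volume N L K H \<pi> =
     (\<Sum>p\<in>{p. is_internal H p}.
        (real (\<pi> p ! (lab H p - 1)) - 1) * card_node N L K H p
        + (if \<pi> p \<noteq> \<pi> (butlast p) then card_node N L K H (butlast p) else 0))"

fun tuples :: "nat \<Rightarrow> nat \<Rightarrow> nat list list" where
  "tuples 0 P = (if P = 1 then [[]] else [])"
| "tuples (Suc n) P =
     concat (map (\<lambda>d. map (Cons d) (tuples n (P div d))) (filter (\<lambda>d. d dvd P) [1..<Suc P]))"

definition valid_list :: "nat \<Rightarrow> (nat \<Rightarrow> nat) \<Rightarrow> nat \<Rightarrow> nat list list" where
  "valid_list N K P = filter (\<lambda>g. \<forall>n\<in>{1..N}. g ! (n - 1) \<le> K n) (tuples N P)"

fun argmin_list :: "('a \<Rightarrow> real) \<Rightarrow> 'a list \<Rightarrow> 'a" where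
  "argmin_list f [] = undefined"
| "argmin_list f [x] = x"
| "argmin_list f (x # y # xs) = (let z = argmin_list f (y # xs) in if f x \<le> f z then x else z)"

text \<open>DP table for a node: its cardinality c, the table g \<mapsto> optimal cost of the
subtree given grid g at the node, the best value, an optimal grid, and the tables
of the children.\<close>
datatype dtree = DN real "nat list \<Rightarrow> real" real "nat list" "dtree list"

fun dt_tab :: "dtree \<Rightarrow> nat list \<Rightarrow> real" where "dt_tab (DN c t b a ds) = t"
fun dt_best :: "dtree \<Rightarrow> real" where "dt_best (DN c t b a ds) = b"
fun dt_arg :: "dtree \<Rightarrow> nat list" where "dt_arg (DN c t b a ds) = a"

text \<open>Each table entry of a node reads, for
each child, one entry of the child table and the child's best value (2 lookups per
child); computing the best value reads every entry of the node's table. The second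
component is the number of table lookups performed.\<close>
fun dp :: "nat list list \<Rightarrow> (nat \<Rightarrow> nat) \<Rightarrow> (nat \<Rightarrow> nat) \<Rightarrow> bool \<Rightarrow> real \<Rightarrow> tree \<Rightarrow> dtree \<times> nat" where
  "dp vg K L isroot cin (Node n ts) =
    (let c = (if isroot \<or> ts = [] then cin else real (K n) / real (L n) * cin);
         rs = map (dp vg K L False c) ts;
         chs = map fst rs;
         tab = (\<lambda>g. (if isroot \<or> ts = [] then 0 else (real (g ! (n - 1)) - 1) * c)
                    + sum_list (map (\<lambda>d. min (dt_tab d g) (dt_best d + c)) chs));
         am = argmin_list tab vg
     in (DN c tab (tab am) am chs,
         sum_list (map snd rs) + 2 * length ts * length vg + length vg))"

text \<open>Top-down reconstruction of the scheme: given the grid chosen at a node,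
each child keeps it if that is optimal (2 lookups), otherwise takes its optimal grid.\<close>
fun recon :: "nat list \<Rightarrow> dtree \<Rightarrow> (nat list \<Rightarrow> nat list) \<times> nat" where
  "recon g (DN c t b a ds) =
    (let rs = map (\<lambda>d. recon (if dt_tab d g \<le> dt_best d + c then g else dt_arg d) d) ds
     in ((\<lambda>p. case p of [] \<Rightarrow> g | i # q \<Rightarrow> if i < length ds then fst (rs ! i) q else g),
         sum_list (map snd rs) + 2 * length ds))"

definition dp_algorithm :: "nat \<Rightarrow> (nat \<Rightarrow> nat) \<Rightarrow> (nat \<Rightarrow> nat) \<Rightarrow> nat \<Rightarrow> tree \<Rightarrow> (nat list \<Rightarrow> nat list) \<times> nat" where
  "dp_algorithm N L K P H =
    (let vg = valid_list N K P;
         (D, c1) = dp vg K L True (\<Prod>j\<in>{1..N}. real (L j)) H;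
         (\<pi>, c2) = recon (dt_arg D) D
     in (\<pi>, c1 + c2))"

end

theory Submission imports Defs begin

lemma tuples_set: "set (tuples n P) = grids n P"
proof (induction n arbitrary: P)
  case 0
  show ?case by (auto simp: grids_def)
next
  case (Suc n)
  show ?case
  proof (intro set_eqI iffI)
    fix g assume "g \<in> set (tuples (Suc n) P)"
    then obtain d g' where g: "g = d # g'" "d dvd P" "1 \<le> d" "d \<le> P" "g' \<in> grids n (P div d)"
      using Suc by auto
    then show "g \<in> grids (Suc n) P" by (auto simp: grids_def)
  next
    fix g assume g: "g \<in> grids (Suc n) P"
    then obtain d g' where gd: "g = d # g'" by (cases g) (auto simp: grids_def)
    have dp: "d > 0" "\<forall>x\<in>set g'. 0 < x" "length g' = n" "d * prod_list g' = P" using g gd by (auto simp: grids_def)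
    have pp: "prod_list g' > 0" using dp(2) by (induction g') auto
    have "d \<le> P" using dp pp by (metis dvd_imp_le dvd_triv_left gr0I mult_is_0)
    moreover have "d dvd P" using dp by auto
    moreover have "g' \<in> grids n (P div d)" using dp by (auto simp: grids_def)
    moreover have "1 \<le> d" using dp by simp
    ultimately have "d \<in> set (filter (\<lambda>d. d dvd P) [1..<Suc P])" by auto
    moreover have "g' \<in> set (tuples n (P div d))"
      using Suc.IH \<open>g' \<in> grids n (P div d)\<close> by auto
    ultimately have A: "map (Cons d) (tuples n (P div d)) \<in> set (map (\<lambda>d. map (Cons d) (tuples n (P div d))) (filter (\<lambda>d. d dvd P) [1..<Suc P]))"
      and B: "d # g' \<in> set (map (Cons d) (tuples n (P div d)))" by auto
    show "g \<in> set (tuples (Suc n) P)" unfolding gd tuples.simps set_concat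
      using A B by (rule UN_I)
  qed
qed

lemma distinct_concat_map:
  "distinct xs \<Longrightarrow> (\<And>x. distinct (f x)) \<Longrightarrow> (\<And>x y. x \<noteq> y \<Longrightarrow> set (f x) \<inter> set (f y) = {})
   \<Longrightarrow> distinct (concat (map f xs))"
proof (induction xs)
  case (Cons a xs)
  have "\<And>y. y \<in> set xs \<Longrightarrow> set (f a) \<inter> set (f y) = {}"
    using Cons.prems by (metis distinct.simps(2))
  then have "set (f a) \<inter> set (concat (map f xs)) = {}" by auto
  then show ?case using Cons by simp
qed simp

lemma tuples_distinct: "distinct (tuples n P)"
proof (induction n arbitrary: P)
  case 0 then show ?case by auto
next
  case (Suc n)
  show ?case unfolding tuples.simps
    by (rule distinct_concat_map) (auto simp: Suc distinct_map)
qed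

lemma psi_len: "psi P N = length (tuples N P)"
  unfolding psi_def tuples_set[symmetric] using tuples_distinct distinct_card by metis

lemma psi_pos: assumes "N \<ge> 1" "P > 0" shows "psi P N \<ge> 1"
proof -
  have "P # replicate (N - 1) 1 \<in> grids N P" using assms by (auto simp: grids_def)
  then have "tuples N P \<noteq> []" using tuples_set by (metis empty_iff list.set(1))
  then show ?thesis by (simp add: psi_len Suc_le_eq)
qed

lemma valid_list_set: "set (valid_list N K P) = {g. valid_grid N K P g}"
  by (auto simp: valid_list_def valid_grid_def tuples_set)

lemma valid_list_len: "length (valid_list N K P) \<le> psi P N"
  by (simp add: valid_list_def psi_len)

lemma argmin_list_prop:
  "xs \<noteq> [] \<Longrightarrow> argmin_list f xs \<in> set xs \<and> (\<forall>x\<in>set xs. f (argmin_list f xs) \<le> f x)"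
  by (induction f xs rule: argmin_list.induct) (auto simp: Let_def)

lemma positions_Node:
  "positions (Node m us) = insert [] (\<Union>i<length us. Cons i ` positions (us ! i))"
  unfolding positions_def
proof (intro set_eqI iffI)
  fix p assume "p \<in> {p. subtree_at (Node m us) p \<noteq> None}"
  then show "p \<in> insert [] (\<Union>i<length us. Cons i ` {p. subtree_at (us ! i) p \<noteq> None})"
    by (cases p) (auto split: if_splits)
qed auto

fun sz :: "tree \<Rightarrow> nat" where
  "sz (Node m us) = Suc (sum_list (map sz us))"

lemma positions_finite_card: "finite (positions t) \<and> card (positions t) = sz t"
proof (induction t rule: tree.induct)
  case (Node m us)
  have IH: "\<And>i. i < length us \<Longrightarrow> finite (positions (us!i)) \<and> card (positions (us!i)) = sz (us!i)"
    using Node nth_mem by blast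
  have fin: "finite (\<Union>i<length us. Cons i ` positions (us ! i))" using IH by auto
  have "card (\<Union>i<length us. Cons i ` positions (us ! i)) = (\<Sum>i<length us. card (Cons i ` positions (us ! i)))"
    by (rule card_UN_disjoint) (use IH in auto)
  also have "\<dots> = (\<Sum>i<length us. sz (us!i))"
    by (rule sum.cong) (auto simp: card_image IH)
  also have "\<dots> = sum_list (map sz us)"
    by (simp add: sum_list_sum_nth atLeast0LessThan)
  moreover have "[] \<notin> (\<Union>i<length us. Cons i ` positions (us ! i))" by auto
  ultimately show ?case unfolding positions_Node using fin by simp
qed

lemma num_nodes_sz: "num_nodes t = sz t"
  using positions_finite_card num_nodes_def by simp

lemma sz_pos: "sz t \<ge> 1" by (cases t) auto

lemma dp_count: "snd (dp vg K L r cin t) + 2 * length vg = 3 * length vg * sz t"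
proof (induction t arbitrary: r cin rule: tree.induct)
  case (Node n ts)
  define c where "c = (if r \<or> ts = [] then cin else real (K n) / real (L n) * cin)"
  have h: "\<And>u. u \<in> set ts \<Longrightarrow> snd (dp vg K L False c u) + 2 * length vg = 3 * length vg * sz u"
    using Node by blast
  have "sum_list (map (\<lambda>u. snd (dp vg K L False c u) + 2 * length vg) ts) = sum_list (map (\<lambda>u. 3 * length vg * sz u) ts)"
    using h by (metis (no_types, lifting) map_eq_conv)
  then have key: "sum_list (map (\<lambda>u. snd (dp vg K L False c u)) ts) + length ts * (2 * length vg) = 3 * length vg * sum_list (map sz ts)"
    by (simp only: sum_list_addf sum_list_triv sum_list_const_mult) simp
  have "snd (dp vg K L r cin (Node n ts)) = sum_list (map (\<lambda>u. snd (dp vg K L False c u)) ts) + 2 * length ts * length vg + length vg"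
    by (simp only: dp.simps Let_def c_def[symmetric] snd_conv map_map comp_def)
  moreover have "2 * length ts * length vg = length ts * (2 * length vg)" by simp
  moreover have "3 * length vg * sz (Node n ts) = 3 * length vg * sum_list (map sz ts) + 3 * length vg"
    by simp
  ultimately show ?case using key by linarith
qed


definition cc :: "(nat \<Rightarrow> nat) \<Rightarrow> (nat \<Rightarrow> nat) \<Rightarrow> real \<Rightarrow> tree \<Rightarrow> real" where
  "cc K L c u = (if children u = [] then c else real (K (tlabel u)) / real (L (tlabel u)) * c)"

definition FF :: "(nat \<Rightarrow> nat) \<Rightarrow> (nat \<Rightarrow> nat) \<Rightarrow> real \<Rightarrow> tree \<Rightarrow> (nat list \<Rightarrow> nat list) \<Rightarrow> nat list \<Rightarrow> real" where
  "FF K L c t \<sigma> p = (real (\<sigma> p ! (lab t p - 1)) - 1) * cwalk K L c t p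
        + (if \<sigma> p \<noteq> \<sigma> (butlast p) then cwalk K L c t (butlast p) else 0)"

definition Vol :: "(nat \<Rightarrow> nat) \<Rightarrow> (nat \<Rightarrow> nat) \<Rightarrow> real \<Rightarrow> tree \<Rightarrow> (nat list \<Rightarrow> nat list) \<Rightarrow> real" where
  "Vol K L c t \<sigma> = (\<Sum>p\<in>{p. is_internal t p}. FF K L c t \<sigma> p)"

lemma volume_Vol: "volume N L K H \<pi> = Vol K L (\<Prod>j\<in>{1..N}. real (L j)) H \<pi>"
  unfolding volume_def Vol_def FF_def card_node_def by simp

lemma subtree_Cons: "i < length us \<Longrightarrow> subtree_at (Node m us) (i # q) = subtree_at (us ! i) q"
  by simp

lemma lab_Cons: "i < length us \<Longrightarrow> lab (Node m us) (i # q) = lab (us ! i) q"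
  by (simp add: lab_def)

lemma cwalk_Cons: "i < length us \<Longrightarrow> cwalk K L c (Node m us) (i # q) = cwalk K L (cc K L c (us ! i)) (us ! i) q"
  by (simp add: cc_def Let_def)

lemma is_internal_Nil: "\<not> is_internal t []"
  by (simp add: is_internal_def)

lemma is_internal_Cons:
  "is_internal (Node m us) (i # q) \<longleftrightarrow> i < length us \<and> ((q = [] \<and> children (us ! i) \<noteq> []) \<or> is_internal (us ! i) q)"
  by (cases q) (auto simp: is_internal_def positions_def)

lemma internal_Node:
  "{p. is_internal (Node m us) p} = (\<Union>i<length us. Cons i ` ({q. q = [] \<and> children (us ! i) \<noteq> []} \<union> {q. is_internal (us ! i) q}))"
proof (intro set_eqI iffI)
  fix p assume "p \<in> {p. is_internal (Node m us) p}"
  then show "p \<in> (\<Union>i<length us. Cons i ` ({q. q = [] \<and> children (us ! i) \<noteq> []} \<union> {q. is_internal (us ! i) q}))"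
    by (cases p) (auto simp: is_internal_Nil is_internal_Cons)
qed (auto simp: is_internal_Cons)

lemma internal_finite: "finite {p. is_internal t p}"
proof -
  have "{p. is_internal t p} \<subseteq> positions t" by (auto simp: is_internal_def)
  then show ?thesis using positions_finite_card finite_subset by blast
qed

lemma FF_Cons:
  assumes "i < length us" "q \<noteq> []"
  shows "FF K L c (Node m us) \<sigma> (i # q) = FF K L (cc K L c (us ! i)) (us ! i) (\<lambda>q. \<sigma> (i # q)) q"
proof -
  have b: "butlast (i # q) = i # butlast q" using assms by simp
  show ?thesis unfolding FF_def b lab_Cons[OF assms(1)] cwalk_Cons[OF assms(1)] by simp
qed

lemma FF_single:
  assumes "i < length us"
  shows "FF K L c (Node m us) \<sigma> [i] = (real (\<sigma> [i] ! (tlabel (us ! i) - 1)) - 1) * cc K L c (us ! i) + (if \<sigma> [i] \<noteq> \<sigma> [] then c else 0)"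
  using assms by (simp add: FF_def lab_def cc_def Let_def)

lemma Vol_split:
  "Vol K L c (Node m us) \<sigma> = (\<Sum>i<length us. (if children (us ! i) = [] then 0 else FF K L c (Node m us) \<sigma> [i])
      + Vol K L (cc K L c (us ! i)) (us ! i) (\<lambda>q. \<sigma> (i # q)))"
proof -
  let ?S = "\<lambda>i. {q. q = [] \<and> children (us ! i) \<noteq> []} \<union> {q. is_internal (us ! i) q}"
  have finS: "\<And>i. finite (?S i)" using internal_finite by auto
  have "Vol K L c (Node m us) \<sigma> = (\<Sum>p\<in>(\<Union>i<length us. Cons i ` ?S i). FF K L c (Node m us) \<sigma> p)"
    unfolding Vol_def internal_Node by simp
  also have "\<dots> = (\<Sum>i<length us. \<Sum>p\<in>Cons i ` ?S i. FF K L c (Node m us) \<sigma> p)"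
    by (rule sum.UNION_disjoint) (use finS in auto)
  also have "\<dots> = (\<Sum>i<length us. \<Sum>q\<in>?S i. FF K L c (Node m us) \<sigma> (i # q))"
    by (rule sum.cong) (auto simp: sum.reindex)
  also have "\<dots> = (\<Sum>i<length us. (if children (us ! i) = [] then 0 else FF K L c (Node m us) \<sigma> [i])
      + Vol K L (cc K L c (us ! i)) (us ! i) (\<lambda>q. \<sigma> (i # q)))"
  proof (rule sum.cong)
    fix i assume i: "i \<in> {..<length us}"
    have d: "{q. q = [] \<and> children (us ! i) \<noteq> []} \<inter> {q. is_internal (us ! i) q} = {}"
      by (auto simp: is_internal_Nil)
    have "(\<Sum>q\<in>?S i. FF K L c (Node m us) \<sigma> (i # q)) =
       (\<Sum>q\<in>{q. q = [] \<and> children (us ! i) \<noteq> []}. FF K L c (Node m us) \<sigma> (i # q))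
       + (\<Sum>q\<in>{q. is_internal (us ! i) q}. FF K L c (Node m us) \<sigma> (i # q))"
      by (rule sum.union_disjoint) (use internal_finite d in auto)
    moreover have "(\<Sum>q\<in>{q. q = [] \<and> children (us ! i) \<noteq> []}. FF K L c (Node m us) \<sigma> (i # q))
        = (if children (us ! i) = [] then 0 else FF K L c (Node m us) \<sigma> [i])"
      by auto
    moreover have "(\<Sum>q\<in>{q. is_internal (us ! i) q}. FF K L c (Node m us) \<sigma> (i # q))
        = Vol K L (cc K L c (us ! i)) (us ! i) (\<lambda>q. \<sigma> (i # q))"
      unfolding Vol_def
      by (rule sum.cong) (use i in \<open>auto intro!: FF_Cons dest: is_internal_Nil[THEN notE]\<close>)
    ultimately show "(\<Sum>q\<in>?S i. FF K L c (Node m us) \<sigma> (i # q)) = (if children (us ! i) = [] then 0 else FF K L c (Node m us) \<sigma> [i])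
      + Vol K L (cc K L c (us ! i)) (us ! i) (\<lambda>q. \<sigma> (i # q))" by simp
  qed simp
  finally show ?thesis .
qed

lemma Vol_leaf: "Vol K L c (Node m []) \<sigma> = 0"
  by (simp add: Vol_split)


fun ccomp :: "(nat \<Rightarrow> nat) \<Rightarrow> (nat \<Rightarrow> nat) \<Rightarrow> bool \<Rightarrow> real \<Rightarrow> tree \<Rightarrow> real" where
  "ccomp K L r cin (Node n ts) = (if r \<or> ts = [] then cin else real (K n) / real (L n) * cin)"

lemma ccomp_cc: "ccomp K L False c u = cc K L c u"
  by (cases u) (simp add: cc_def)

lemma ccomp_nonneg: "cin \<ge> 0 \<Longrightarrow> ccomp K L r cin t \<ge> 0"
  by (cases t) simp

lemma sum_list_map_nth: "sum_list (map f xs) = (\<Sum>i<length xs. f (xs ! i))"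
  by (simp add: sum_list_sum_nth atLeast0LessThan)

lemma dp_facts:
  fixes vg K L r cin n ts
  defines "D \<equiv> fst (dp vg K L r cin (Node n ts))"
  defines "c \<equiv> ccomp K L r cin (Node n ts)"
  defines "ds \<equiv> map (\<lambda>u. fst (dp vg K L False c u)) ts"
  shows "D = DN c (dt_tab D) (dt_best D) (dt_arg D) ds"
    and "\<And>g. dt_tab D g = (if r \<or> ts = [] then 0 else (real (g ! (n - 1)) - 1) * c)
             + (\<Sum>i<length ts. min (dt_tab (ds ! i) g) (dt_best (ds ! i) + c))"
    and "dt_arg D = argmin_list (dt_tab D) vg"
    and "dt_best D = dt_tab D (dt_arg D)"
proof -
  have c': "c = (if r \<or> ts = [] then cin else real (K n) / real (L n) * cin)" unfolding c_def by simp
  have eq: "D = DN c (\<lambda>g. (if r \<or> ts = [] then 0 else (real (g ! (n - 1)) - 1) * c)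
                    + sum_list (map (\<lambda>d. min (dt_tab d g) (dt_best d + c)) ds))
              ((\<lambda>g. (if r \<or> ts = [] then 0 else (real (g ! (n - 1)) - 1) * c)
                    + sum_list (map (\<lambda>d. min (dt_tab d g) (dt_best d + c)) ds))
                (argmin_list (\<lambda>g. (if r \<or> ts = [] then 0 else (real (g ! (n - 1)) - 1) * c)
                    + sum_list (map (\<lambda>d. min (dt_tab d g) (dt_best d + c)) ds)) vg))
              (argmin_list (\<lambda>g. (if r \<or> ts = [] then 0 else (real (g ! (n - 1)) - 1) * c)
                    + sum_list (map (\<lambda>d. min (dt_tab d g) (dt_best d + c)) ds)) vg) ds"
    unfolding D_def ds_def c' by (simp add: Let_def comp_def)
  show "D = DN c (dt_tab D) (dt_best D) (dt_arg D) ds" using eq by simp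
  show "\<And>g. dt_tab D g = (if r \<or> ts = [] then 0 else (real (g ! (n - 1)) - 1) * c)
             + (\<Sum>i<length ts. min (dt_tab (ds ! i) g) (dt_best (ds ! i) + c))"
    by (subst eq) (simp add: sum_list_map_nth ds_def)
  show "dt_arg D = argmin_list (dt_tab D) vg" using eq by simp
  show "dt_best D = dt_tab D (dt_arg D)" using eq by simp
qed

lemma leaf_tab: "dt_tab (fst (dp vg K L r cin (Node n []))) g = 0"
  by (simp add: Let_def)

lemma leaf_best: "dt_best (fst (dp vg K L r cin (Node n []))) = 0"
  by (simp add: Let_def)

lemma Node_positions_Cons: "i < length ts \<Longrightarrow> q \<in> positions (ts ! i) \<Longrightarrow> i # q \<in> positions (Node n ts)"
  by (auto simp: positions_Node)

lemma Nil_positions: "[] \<in> positions t"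
  by (cases t) (auto simp: positions_Node)

lemma lower:
  assumes "vg \<noteq> []" "cin \<ge> 0" "\<forall>p\<in>positions t. \<sigma> p \<in> set vg"
  shows "dt_tab (fst (dp vg K L r cin t)) (\<sigma> []) \<le>
     (if r \<or> children t = [] then 0 else (real (\<sigma> [] ! (tlabel t - 1)) - 1) * ccomp K L r cin t)
     + Vol K L (ccomp K L r cin t) t \<sigma>"
  using assms(2,3)
proof (induction t arbitrary: r cin \<sigma> rule: tree.induct)
  case (Node n ts)
  define c where "c = ccomp K L r cin (Node n ts)"
  define ds where "ds = map (\<lambda>u. fst (dp vg K L False c u)) ts"
  have c0: "c \<ge> 0" unfolding c_def using Node.prems ccomp_nonneg by blast
  let ?own = "(if r \<or> ts = [] then 0 else (real (\<sigma> [] ! (n - 1)) - 1) * c)"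
  have tab: "dt_tab (fst (dp vg K L r cin (Node n ts))) (\<sigma> []) = ?own
             + (\<Sum>i<length ts. min (dt_tab (ds ! i) (\<sigma> [])) (dt_best (ds ! i) + c))"
    unfolding c_def ds_def by (rule dp_facts(2))
  have vol: "Vol K L c (Node n ts) \<sigma> = (\<Sum>i<length ts. (if children (ts ! i) = [] then 0 else FF K L c (Node n ts) \<sigma> [i])
      + Vol K L (cc K L c (ts ! i)) (ts ! i) (\<lambda>q. \<sigma> (i # q)))"
    by (rule Vol_split)
  have each: "min (dt_tab (ds ! i) (\<sigma> [])) (dt_best (ds ! i) + c) \<le>
      (if children (ts ! i) = [] then 0 else FF K L c (Node n ts) \<sigma> [i])
      + Vol K L (cc K L c (ts ! i)) (ts ! i) (\<lambda>q. \<sigma> (i # q))" if i: "i < length ts" for i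
  proof -
    obtain m us where u: "ts ! i = Node m us" by (cases "ts ! i")
    have dsi: "ds ! i = fst (dp vg K L False c (ts ! i))" using i ds_def by simp
    have pos: "\<forall>p\<in>positions (ts ! i). (\<lambda>q. \<sigma> (i # q)) p \<in> set vg"
      using Node.prems(2) i Node_positions_Cons by blast
    have IH: "dt_tab (ds ! i) (\<sigma> [i]) \<le>
      (if children (ts ! i) = [] then 0 else (real (\<sigma> [i] ! (tlabel (ts ! i) - 1)) - 1) * cc K L c (ts ! i))
      + Vol K L (cc K L c (ts ! i)) (ts ! i) (\<lambda>q. \<sigma> (i # q))"
      using Node.IH[OF nth_mem[OF i] c0 pos, of False] unfolding dsi ccomp_cc by simp
    show ?thesis
    proof (cases "us = []")
      case True
      then show ?thesis using c0 u dsi by (simp add: Let_def Vol_leaf)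
    next
      case False
      have ch: "children (ts ! i) \<noteq> []" using u False by simp
      have bestle: "dt_best (ds ! i) \<le> dt_tab (ds ! i) (\<sigma> [i])"
      proof -
        have "dt_best (ds ! i) = dt_tab (ds ! i) (argmin_list (dt_tab (ds ! i)) vg)"
          unfolding dsi u using dp_facts(3,4)[of vg K L False c m us] by metis
        also have "\<dots> \<le> dt_tab (ds ! i) (\<sigma> [i])"
          using argmin_list_prop[OF assms(1)] Node.prems(2) Node_positions_Cons[OF i Nil_positions] by blast
        finally show ?thesis .
      qed
      show ?thesis
      proof (cases "\<sigma> [i] = \<sigma> []")
        case True
        then show ?thesis using IH ch by (simp add: FF_single[OF i] min.coboundedI1)
      next
        case False
        then show ?thesis using IH ch bestle by (simp add: FF_single[OF i] min.coboundedI2)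
      qed
    qed
  qed
  have "(\<Sum>i<length ts. min (dt_tab (ds ! i) (\<sigma> [])) (dt_best (ds ! i) + c)) \<le> Vol K L c (Node n ts) \<sigma>"
    unfolding vol by (rule sum_mono) (use each in auto)
  then show ?case unfolding tab c_def[symmetric] by simp
qed


lemma recon_Nil: "fst (recon g (DN c t b a ds)) [] = g"
  by (simp add: Let_def)

lemma recon_Cons: "i < length ds \<Longrightarrow> fst (recon g (DN c t b a ds)) (i # q) =
   fst (recon (if dt_tab (ds ! i) g \<le> dt_best (ds ! i) + c then g else dt_arg (ds ! i)) (ds ! i)) q"
  by (simp add: Let_def)

lemma recon_count: "snd (recon g (DN c t b a ds)) =
   (\<Sum>i<length ds. snd (recon (if dt_tab (ds ! i) g \<le> dt_best (ds ! i) + c then g else dt_arg (ds ! i)) (ds ! i))) + 2 * length ds"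
  by (simp add: Let_def sum_list_map_nth)

lemma arg_in:
  assumes "vg \<noteq> []" shows "dt_arg (fst (dp vg K L r cin t)) \<in> set vg"
proof (cases t)
  case (Node m us)
  show ?thesis unfolding Node dp_facts(3) using argmin_list_prop[OF assms] by blast
qed

lemma recon_cnt: "snd (recon g (fst (dp vg K L r cin t))) + 2 \<le> 2 * sz t"
proof (induction t arbitrary: r cin g rule: tree.induct)
  case (Node n ts)
  define c where "c = ccomp K L r cin (Node n ts)"
  define ds where "ds = map (\<lambda>u. fst (dp vg K L False c u)) ts"
  have D: "fst (dp vg K L r cin (Node n ts)) = DN c (dt_tab (fst (dp vg K L r cin (Node n ts))))
     (dt_best (fst (dp vg K L r cin (Node n ts)))) (dt_arg (fst (dp vg K L r cin (Node n ts)))) ds"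
    unfolding c_def ds_def by (rule dp_facts(1))
  have each: "snd (recon (if dt_tab (ds ! i) g \<le> dt_best (ds ! i) + c then g else dt_arg (ds ! i)) (ds ! i)) + 2
      \<le> 2 * sz (ts ! i)" if i: "i < length ts" for i
    using Node.IH[OF nth_mem[OF i]] i ds_def by simp
  have "(\<Sum>i<length ts. snd (recon (if dt_tab (ds ! i) g \<le> dt_best (ds ! i) + c then g else dt_arg (ds ! i)) (ds ! i)) + 2)
      \<le> (\<Sum>i<length ts. 2 * sz (ts ! i))"
    by (rule sum_mono) (use each in auto)
  moreover have "(\<Sum>i<length ts. 2 * sz (ts ! i)) = 2 * sum_list (map sz ts)"
    by (simp add: sum_list_map_nth sum_distrib_left)
  moreover have "(\<Sum>i<length ts. snd (recon (if dt_tab (ds ! i) g \<le> dt_best (ds ! i) + c then g else dt_arg (ds ! i)) (ds ! i)) + 2)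
     = (\<Sum>i<length ts. snd (recon (if dt_tab (ds ! i) g \<le> dt_best (ds ! i) + c then g else dt_arg (ds ! i)) (ds ! i))) + 2 * length ts"
    by (simp only: sum.distrib) simp
  ultimately have "(\<Sum>i<length ts. snd (recon (if dt_tab (ds ! i) g \<le> dt_best (ds ! i) + c then g else dt_arg (ds ! i)) (ds ! i))) + 2 * length ts
      \<le> 2 * sum_list (map sz ts)"
    by linarith
  moreover have "snd (recon g (fst (dp vg K L r cin (Node n ts)))) =
   (\<Sum>i<length ds. snd (recon (if dt_tab (ds ! i) g \<le> dt_best (ds ! i) + c then g else dt_arg (ds ! i)) (ds ! i))) + 2 * length ds"
    by (subst D) (rule recon_count)
  moreover have "length ds = length ts" using ds_def by simp
  ultimately show ?case by simp
qed

lemma upper: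
  assumes "vg \<noteq> []" "cin \<ge> 0"
  shows "fst (recon g (fst (dp vg K L r cin t))) [] = g
    \<and> (\<forall>p\<in>positions t. fst (recon g (fst (dp vg K L r cin t))) p \<in> insert g (set vg))
    \<and> dt_tab (fst (dp vg K L r cin t)) g =
     (if r \<or> children t = [] then 0 else (real (g ! (tlabel t - 1)) - 1) * ccomp K L r cin t)
     + Vol K L (ccomp K L r cin t) t (fst (recon g (fst (dp vg K L r cin t))))"
  using assms(2)
proof (induction t arbitrary: r cin g rule: tree.induct)
  case (Node n ts)
  define c where "c = ccomp K L r cin (Node n ts)"
  define ds where "ds = map (\<lambda>u. fst (dp vg K L False c u)) ts"
  define D where "D = fst (dp vg K L r cin (Node n ts))"
  have c0: "c \<ge> 0" unfolding c_def using Node.prems ccomp_nonneg by blast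
  have D: "D = DN c (dt_tab D) (dt_best D) (dt_arg D) ds"
    unfolding c_def ds_def D_def by (rule dp_facts(1))
  have tab: "dt_tab D g = (if r \<or> ts = [] then 0 else (real (g ! (n - 1)) - 1) * c)
             + (\<Sum>i<length ts. min (dt_tab (ds ! i) g) (dt_best (ds ! i) + c))"
    unfolding c_def ds_def D_def by (rule dp_facts(2))
  define \<pi> where "\<pi> = fst (recon g D)"
  define gs where "gs i = (if dt_tab (ds ! i) g \<le> dt_best (ds ! i) + c then g else dt_arg (ds ! i))" for i
  have lds: "length ds = length ts" using ds_def by simp
  have pi_nil: "\<pi> [] = g" unfolding \<pi>_def by (subst D) (rule recon_Nil)
  have pi_i: "(\<lambda>q. \<pi> (i # q)) = fst (recon (gs i) (ds ! i))" if i: "i < length ts" for i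
    unfolding \<pi>_def gs_def by (subst D) (use i lds in \<open>simp only: recon_Cons\<close>)
  have dsi: "ds ! i = fst (dp vg K L False c (ts ! i))" if "i < length ts" for i
    using that ds_def by simp
  have IH: "fst (recon (gs i) (ds ! i)) [] = gs i
    \<and> (\<forall>p\<in>positions (ts ! i). fst (recon (gs i) (ds ! i)) p \<in> insert (gs i) (set vg))
    \<and> dt_tab (ds ! i) (gs i) =
     (if children (ts ! i) = [] then 0 else (real (gs i ! (tlabel (ts ! i) - 1)) - 1) * cc K L c (ts ! i))
     + Vol K L (cc K L c (ts ! i)) (ts ! i) (fst (recon (gs i) (ds ! i)))" if i: "i < length ts" for i
    using Node.IH[OF nth_mem[OF i] c0, where r=False and g="gs i"] unfolding dsi[OF i] ccomp_cc by simp
  have gs_in: "gs i \<in> insert g (set vg)" if i: "i < length ts" for i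
    using arg_in[OF assms(1)] dsi[OF i] gs_def by auto
  have valid: "\<forall>p\<in>positions (Node n ts). \<pi> p \<in> insert g (set vg)"
  proof
    fix p assume p: "p \<in> positions (Node n ts)"
    show "\<pi> p \<in> insert g (set vg)"
    proof (cases p)
      case Nil then show ?thesis using pi_nil by simp
    next
      case (Cons i q)
      then have i: "i < length ts" and q: "q \<in> positions (ts ! i)" using p by (auto simp: positions_Node)
      have "\<pi> p = fst (recon (gs i) (ds ! i)) q" using pi_i[OF i] Cons by (metis)
      then show ?thesis using IH[OF i] q gs_in[OF i] by auto
    qed
  qed
  have each: "min (dt_tab (ds ! i) g) (dt_best (ds ! i) + c) =
      (if children (ts ! i) = [] then 0 else FF K L c (Node n ts) \<pi> [i])
      + Vol K L (cc K L c (ts ! i)) (ts ! i) (\<lambda>q. \<pi> (i # q))" if i: "i < length ts" for i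
  proof -
    obtain m us where u: "ts ! i = Node m us" by (cases "ts ! i")
    have pii: "\<pi> [i] = gs i" using fun_cong[OF pi_i[OF i], of "[]"] IH[OF i] by simp
    show ?thesis
    proof (cases "us = []")
      case True
      then show ?thesis using c0 u dsi[OF i] by (simp add: Let_def Vol_leaf)
    next
      case False
      have ch: "children (ts ! i) \<noteq> []" using u False by simp
      have bt: "dt_best (ds ! i) = dt_tab (ds ! i) (dt_arg (ds ! i))"
        unfolding dsi[OF i] u using dp_facts(4)[of vg K L False c m us] by metis
      have val: "(if children (ts ! i) = [] then 0 else FF K L c (Node n ts) \<pi> [i])
        + Vol K L (cc K L c (ts ! i)) (ts ! i) (\<lambda>q. \<pi> (i # q))
        = dt_tab (ds ! i) (gs i) + (if gs i \<noteq> g then c else 0)"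
        using ch IH[OF i] pi_i[OF i] pii pi_nil by (simp add: FF_single[OF i])
      show ?thesis
      proof (cases "dt_tab (ds ! i) g \<le> dt_best (ds ! i) + c")
        case True
        then show ?thesis unfolding val gs_def by simp
      next
        case False
        then have "dt_arg (ds ! i) \<noteq> g" using bt c0 by auto
        then show ?thesis unfolding val gs_def using False bt by simp
      qed
    qed
  qed
  have vol: "Vol K L c (Node n ts) \<pi> = (\<Sum>i<length ts. (if children (ts ! i) = [] then 0 else FF K L c (Node n ts) \<pi> [i])
      + Vol K L (cc K L c (ts ! i)) (ts ! i) (\<lambda>q. \<pi> (i # q)))"
    by (rule Vol_split)
  have "(\<Sum>i<length ts. min (dt_tab (ds ! i) g) (dt_best (ds ! i) + c)) = Vol K L c (Node n ts) \<pi>"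
    unfolding vol by (rule sum.cong) (use each in auto)
  then show ?case using pi_nil valid tab
    unfolding \<pi>_def D_def c_def by simp
qed


lemma dp_alg_eq: "dp_algorithm N L K P H =
  (let vg = valid_list N K P; D = fst (dp vg K L True (\<Prod>j\<in>{1..N}. real (L j)) H) in
   (fst (recon (dt_arg D) D), snd (dp vg K L True (\<Prod>j\<in>{1..N}. real (L j)) H) + snd (recon (dt_arg D) D)))"
  unfolding dp_algorithm_def by (simp add: Let_def split: prod.split)

lemma ccomp_True: "ccomp K L True c t = c"
  by (cases t) simp

lemma arg_eq: "dt_arg (fst (dp vg K L r cin t)) = argmin_list (dt_tab (fst (dp vg K L r cin t))) vg"
  by (cases t) (simp only: dp_facts(3))

theorem mainTheorem3:
  "\<exists>C::real. \<forall>N (L::nat \<Rightarrow> nat) (K::nat \<Rightarrow> nat) (P::nat) H.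
     N \<ge> 1 \<and> (\<forall>n\<in>{1..N}. 0 < K n \<and> K n \<le> L n) \<and> 0 < P \<and> ttm_tree N H \<longrightarrow>
     (let (\<pi>, cnt) = dp_algorithm N L K P H in
        ((\<exists>\<sigma>. dyn_scheme N K P H \<sigma>) \<longrightarrow>
            dyn_scheme N K P H \<pi> \<and>
            (\<forall>\<sigma>. dyn_scheme N K P H \<sigma> \<longrightarrow> volume N L K H \<pi> \<le> volume N L K H \<sigma>)) \<and>
        real cnt \<le> C * real (num_nodes H) * real (psi P N))"
proof (intro exI[of _ 5] allI impI)
  fix N :: nat and L K :: "nat \<Rightarrow> nat" and P :: nat and H :: tree
  assume asm: "N \<ge> 1 \<and> (\<forall>n\<in>{1..N}. 0 < K n \<and> K n \<le> L n) \<and> 0 < P \<and> ttm_tree N H"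
  define vg where "vg = valid_list N K P"
  define c0 where "c0 = (\<Prod>j\<in>{1..N}. real (L j))"
  define D where "D = fst (dp vg K L True c0 H)"
  define \<pi> where "\<pi> = fst (recon (dt_arg D) D)"
  define cnt where "cnt = snd (dp vg K L True c0 H) + snd (recon (dt_arg D) D)"
  have alg: "dp_algorithm N L K P H = (\<pi>, cnt)"
    unfolding dp_alg_eq \<pi>_def cnt_def D_def vg_def c0_def by (simp add: Let_def)
  have c0: "c0 \<ge> 0" unfolding c0_def by (simp add: prod_nonneg)
  have vset: "set vg = {g. valid_grid N K P g}" unfolding vg_def by (rule valid_list_set)
  have ds_iff: "dyn_scheme N K P H \<sigma> \<longleftrightarrow> (\<forall>p\<in>positions H. \<sigma> p \<in> set vg)" for \<sigma>
    unfolding dyn_scheme_def vset by simp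
  have part1: "dyn_scheme N K P H \<pi> \<and>
            (\<forall>\<sigma>. dyn_scheme N K P H \<sigma> \<longrightarrow> volume N L K H \<pi> \<le> volume N L K H \<sigma>)"
    if ex: "\<exists>\<sigma>. dyn_scheme N K P H \<sigma>"
  proof -
    obtain \<sigma>0 where "dyn_scheme N K P H \<sigma>0" using ex by blast
    then have "\<sigma>0 [] \<in> set vg" using ds_iff Nil_positions by blast
    then have vne: "vg \<noteq> []" by auto
    have ain: "dt_arg D \<in> set vg" unfolding D_def by (rule arg_in[OF vne])
    note up = upper[OF vne c0, of "dt_arg D" K L True H, folded D_def, folded \<pi>_def]
    have dsp: "dyn_scheme N K P H \<pi>" unfolding ds_iff using up ain by auto
    have volpi: "volume N L K H \<pi> = dt_tab D (dt_arg D)"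
      using up unfolding volume_Vol c0_def[symmetric] ccomp_True by simp
    have "volume N L K H \<pi> \<le> volume N L K H \<sigma>" if s: "dyn_scheme N K P H \<sigma>" for \<sigma>
    proof -
      have pos: "\<forall>p\<in>positions H. \<sigma> p \<in> set vg" using s ds_iff by blast
      have low: "dt_tab D (\<sigma> []) \<le> volume N L K H \<sigma>"
        using lower[OF vne c0 pos, of K L True] unfolding volume_Vol c0_def[symmetric] ccomp_True D_def by simp
      have "dt_tab D (dt_arg D) \<le> dt_tab D (\<sigma> [])"
        using argmin_list_prop[OF vne, of "dt_tab D"] pos Nil_positions
        unfolding D_def arg_eq[symmetric] by blast
      then show ?thesis using low volpi by simp
    qed
    then show ?thesis using dsp by blast
  qed
  have cntle: "cnt \<le> 5 * sz H * psi P N"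
  proof -
    have a: "snd (dp vg K L True c0 H) + 2 * length vg = 3 * length vg * sz H" by (rule dp_count)
    have b: "snd (recon (dt_arg D) D) + 2 \<le> 2 * sz H" unfolding D_def by (rule recon_cnt)
    have v: "length vg \<le> psi P N" unfolding vg_def by (rule valid_list_len)
    have p1: "psi P N \<ge> 1" using asm psi_pos by blast
    have "3 * length vg * sz H \<le> 3 * psi P N * sz H" using v by simp
    moreover have "2 * sz H \<le> 2 * sz H * psi P N" using p1 by simp
    ultimately have "cnt \<le> 3 * psi P N * sz H + 2 * sz H * psi P N" using a b unfolding cnt_def by linarith
    then show ?thesis by (simp add: algebra_simps)
  qed
  have "real cnt \<le> 5 * real (num_nodes H) * real (psi P N)"
  proof -
    have "real cnt \<le> real (5 * sz H * psi P N)" using cntle by linarith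
    then show ?thesis by (simp add: num_nodes_sz)
  qed
  then show "let (\<pi>, cnt) = dp_algorithm N L K P H in
        ((\<exists>\<sigma>. dyn_scheme N K P H \<sigma>) \<longrightarrow>
            dyn_scheme N K P H \<pi> \<and>
            (\<forall>\<sigma>. dyn_scheme N K P H \<sigma> \<longrightarrow> volume N L K H \<pi> \<le> volume N L K H \<sigma>)) \<and>
        real cnt \<le> 5 * real (num_nodes H) * real (psi P N)"
    unfolding alg using part1 by simp
qed

end
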